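(* Let $m\ge 1$ and $n\ge 0$ be integers and let $M(h)$, $h\in(0,+\infty)$, be the first order Melnikov function of system $(1.1)_\epsilon$ described in the context. Then there exist real constants $\rho^{\pm}_{i,j}$ ($0\le i+j\le n$), depending on the coefficients of $p^\pm,q^\pm$, and a polynomial $\Phi$ of degree at most $m(n+1)$ such that $$M(h)=\sum_{i+j=0}^{n}\rho^{+}_{i,j}J_{i,j}(h)+\sum_{i+j=0}^{n}\rho^{-}_{i,j}I_{i,j}(h)+\Phi(u(h)),\qquad h\in(0,+\infty),$$ where $J_{i,j}(h)=\int_{L_h^+}x^iy^jdx$ and $I_{i,j}(h)=\int_{L_h^-}x^iy^jdx$.
   Context: System $(1.1)_\epsilon$: $\dot x=y+\epsilon p^{+}(x,y),\ \dot y=-x+\epsilon q^{+}(x,y)$ for $y\ge x^{m}$, and $\dot x=y+\epsilon p^{-}(x,y),\ \dot y=-x+\epsilon q^{-}(x,y)$ for $y<x^{m}$, where $p^{\pm}=\sum_{i+j=0}^{n}a^{\pm}_{i,j}x^iy^j$, $q^{\pm}=\sum_{i+j=0}^{n}b^{\pm}_{i,j}x^iy^j$ are real polynomials of degree $n$. For $h>0$ let $u=u(h)>0$ be the unique positive number with $u^2+u^{2m}=h$; the circle $x^2+y^2=h$ meets $y=x^m$ at $A=(-u,(-u)^m)$ and $B=(u,u^m)$. $L_h^{+}$ is the arc of this circle in $\{y\ge x^m\}$ traversed clockwise from $A$ to $B$, and $L_h^-$ the arc in $\{y\le x^m\}$ traversed clockwise from $B$ to $A$. The first order Melnikov function is $M(h)=\int_{L_h^+}q^+dx-p^+dy+\int_{L_h^-}q^-dx-p^-dy$.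 *)

theory Defs
  imports "HOL-Analysis.Analysis" "HOL-Computational_Algebra.Polynomial"
begin

definition bipoly :: "nat \<Rightarrow> (nat \<Rightarrow> nat \<Rightarrow> real) \<Rightarrow> real \<Rightarrow> real \<Rightarrow> real" where
  "bipoly n c x y = (\<Sum>(i,j)\<in>{(i,j). i + j \<le> n}. c i j * x ^ i * y ^ j)"

definition uu :: "nat \<Rightarrow> real \<Rightarrow> real" where
  "uu m h = (THE u. u > 0 \<and> u ^ 2 + u ^ (2 * m) = h)"

text \<open>Line integral of P dx + Q dy along the circle arc x = r sin t, y = r cos t,
  t from a to b (increasing t = clockwise orientation).\<close>
definition arc_int :: "(real \<Rightarrow> real \<Rightarrow> real) \<Rightarrow> (real \<Rightarrow> real \<Rightarrow> real)
    \<Rightarrow> real \<Rightarrow> real \<Rightarrow> real \<Rightarrow> real" where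
  "arc_int P Q r a b = integral {a..b}
     (\<lambda>t. P (r * sin t) (r * cos t) * (r * cos t) + Q (r * sin t) (r * cos t) * (- r * sin t))"

text \<open>Angles of B = (u, u^m) and A = (-u, (-u)^m) on the circle of radius sqrt h.\<close>
definition angB :: "nat \<Rightarrow> real \<Rightarrow> real" where
  "angB m h = arccos (uu m h ^ m / sqrt h)"

definition angA :: "nat \<Rightarrow> real \<Rightarrow> real" where
  "angA m h = - arccos ((- uu m h) ^ m / sqrt h)"

text \<open>Integral over L_h^+ (clockwise from A to B, in y \<ge> x^m) and over
  L_h^- (clockwise from B to A, in y \<le> x^m).\<close>
definition int_plus :: "nat \<Rightarrow> (real \<Rightarrow> real \<Rightarrow> real) \<Rightarrow> (real \<Rightarrow> real \<Rightarrow> real) \<Rightarrow> real \<Rightarrow> real" where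
  "int_plus m P Q h = arc_int P Q (sqrt h) (angA m h) (angB m h)"

definition int_minus :: "nat \<Rightarrow> (real \<Rightarrow> real \<Rightarrow> real) \<Rightarrow> (real \<Rightarrow> real \<Rightarrow> real) \<Rightarrow> real \<Rightarrow> real" where
  "int_minus m P Q h = arc_int P Q (sqrt h) (angB m h) (angA m h + 2 * pi)"

definition melnikov :: "nat \<Rightarrow> nat \<Rightarrow> (nat \<Rightarrow> nat \<Rightarrow> real) \<Rightarrow> (nat \<Rightarrow> nat \<Rightarrow> real)
    \<Rightarrow> (nat \<Rightarrow> nat \<Rightarrow> real) \<Rightarrow> (nat \<Rightarrow> nat \<Rightarrow> real) \<Rightarrow> real \<Rightarrow> real" where
  "melnikov m n ap bp am bm h =
     int_plus m (bipoly n bp) (\<lambda>x y. - bipoly n ap x y) h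
   + int_minus m (bipoly n bm) (\<lambda>x y. - bipoly n am x y) h"

definition JJ :: "nat \<Rightarrow> nat \<Rightarrow> nat \<Rightarrow> real \<Rightarrow> real" where
  "JJ m i j h = int_plus m (\<lambda>x y. x ^ i * y ^ j) (\<lambda>_ _. 0) h"

definition II :: "nat \<Rightarrow> nat \<Rightarrow> nat \<Rightarrow> real \<Rightarrow> real" where
  "II m i j h = int_minus m (\<lambda>x y. x ^ i * y ^ j) (\<lambda>_ _. 0) h"

end

theory Submission
  imports Defs
begin


lemma ibp:
  fixes a b r :: real
  assumes "a \<le> b"
  shows "integral {a..b} (\<lambda>t. (r * sin t)^i * (r * cos t)^j * (- r * sin t)) =
    ((r * sin b)^i*(r * cos b)^(j+1) - (r * sin a)^i*(r * cos a)^(j+1)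
     - real i * integral {a..b} (\<lambda>t. (r * sin t)^(i-1) * (r * cos t)^(j+1) * (r * cos t))) / real (j+1)"
proof -
  define A where "A = (\<lambda>t. (r * sin t)^(i-1) * (r * cos t)^(j+1) * (r * cos t))"
  define B where "B = (\<lambda>t. (r * sin t)^i * (r * cos t)^j * (- r * sin t))"
  define F where "F = (\<lambda>t. (r * sin t)^i*(r * cos t)^(j+1))"
  have d: "(F has_real_derivative (real i * A t + real (j+1) * B t)) (at t)" for t
    unfolding F_def A_def B_def
    by (rule derivative_eq_intros refl | simp)+
  have "((\<lambda>t. real i * A t + real (j+1) * B t) has_integral (F b - F a)) {a..b}"
    using assms d
    by (intro fundamental_theorem_of_calculus)
       (auto simp: has_real_derivative_iff_has_vector_derivative[symmetric] intro: has_field_derivative_at_within)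
  then have e: "integral {a..b} (\<lambda>t. real i * A t + real (j+1) * B t) = F b - F a"
    by (rule integral_unique)
  have iA: "A integrable_on {a..b}" unfolding A_def
    by (intro integrable_continuous_interval continuous_intros)
  have iB: "B integrable_on {a..b}" unfolding B_def
    by (intro integrable_continuous_interval continuous_intros)
  have "integral {a..b} (\<lambda>t. real i * A t + real (j+1) * B t)
      = real i * integral {a..b} A + real (j+1) * integral {a..b} B"
    using iA iB by (subst integral_add) (auto intro: integrable_on_cmult_left integrable_on_mult_right)
  with e have "real (j+1) * integral {a..b} B = F b - F a - real i * integral {a..b} A" by simp
  then show ?thesis unfolding A_def B_def F_def
    by (simp add: field_simps del: of_nat_Suc)
qed

lemma uu_prop:
  assumes m: "m \<ge> 1" and h: "h > 0"
  shows "uu m h > 0 \<and> (uu m h)^2 + (uu m h)^(2*m) = h"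
proof -
  define g where "g = (\<lambda>u::real. u^2 + u^(2*m))"
  have g0: "g 0 = 0" using m by (simp add: g_def)
  have g1: "g (1+h) \<ge> h"
  proof -
    have "(1+h)^2 \<ge> h" using h by (simp add: power2_eq_square algebra_simps)
    moreover have "(1+h)^(2*m) \<ge> 0" using h by simp
    ultimately show ?thesis unfolding g_def by linarith
  qed
  have "\<exists>u\<ge>0. u \<le> 1+h \<and> g u = h"
    using h g0 g1 by (intro IVT) (auto simp: g_def power_0_left intro!: continuous_intros)
  then obtain u where u: "u \<ge> 0" "g u = h" by blast
  have upos: "u > 0" using u g0 h by (cases "u = 0") auto
  have mono: "g v < g w" if "0 < v" "v < w" for v w
  proof -
    have "v^2 < w^2" using that by (simp add: power_strict_mono)
    moreover have "v^(2*m) \<le> w^(2*m)" using that by (simp add: power_mono)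
    ultimately show ?thesis by (simp add: g_def)
  qed
  have ex: "\<exists>!u. u > 0 \<and> u^2 + u^(2*m) = h"
  proof (rule ex1I[of _ u])
    show "u > 0 \<and> u^2 + u^(2*m) = h" using upos u by (simp add: g_def)
  next
    fix v assume v: "v > 0 \<and> v^2 + v^(2*m) = h"
    show "v = u"
    proof (rule ccontr)
      assume "v \<noteq> u"
      then consider "v < u" | "u < v" by linarith
      then show False using mono[of v u] mono[of u v] v u upos by (cases; simp add: g_def)
    qed
  qed
  show ?thesis unfolding uu_def by (rule theI'[OF ex])
qed

lemma endpoints:
  assumes m: "m \<ge> 1" and h: "h > 0"
  defines "u \<equiv> uu m h"
  shows "sqrt h * sin (angB m h) = u" "sqrt h * cos (angB m h) = u^m"
    "sqrt h * sin (angA m h) = - u" "sqrt h * cos (angA m h) = (-u)^m"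
    "angA m h \<le> angB m h" "angB m h \<le> angA m h + 2*pi"
proof -
  have up: "u > 0" "u^2 + u^(2*m) = h" using uu_prop[OF m h] by (auto simp: u_def)
  have sh: "sqrt h > 0" using h by simp
  have "u^(2*m) \<le> h" using up(2) zero_le_power2[of u] by linarith
  then have "(u^m)^2 \<le> h" by (simp add: power_mult[symmetric] mult.commute)
  then have le: "\<bar>u^m\<bar> \<le> sqrt h" using up by (simp add: real_le_rsqrt)
  have c1: "\<bar>u^m / sqrt h\<bar> \<le> 1" using le sh by (simp add: abs_div divide_le_eq_1)
  have c2: "\<bar>(-u)^m / sqrt h\<bar> \<le> 1" using c1 by (simp add: abs_div power_abs[symmetric])
  have key: "sqrt h * sqrt (1 - (v / sqrt h)^2) = u" if "\<bar>v\<bar> = u^m" for v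
  proof -
    have "v^2 = u^(2*m)" using that by (metis power2_abs power_even_eq mult.commute)
    have "sqrt h * sqrt (1 - (v / sqrt h)^2) = sqrt (h * (1 - (v / sqrt h)^2))"
      using h by (simp add: real_sqrt_mult)
    also have "h * (1 - (v / sqrt h)^2) = h - v^2" using h by (simp add: power_divide field_simps)
    also have "\<dots> = u^2" using up `v^2 = u^(2*m)` by simp
    finally show ?thesis using up by simp
  qed
  show "sqrt h * sin (angB m h) = u"
    unfolding angB_def u_def[symmetric] using c1 key[of "u^m"] up by (simp add: sin_arccos_abs)
  show "sqrt h * cos (angB m h) = u^m"
    unfolding angB_def u_def[symmetric] using c1 sh by (simp add: cos_arccos_abs)
  show "sqrt h * sin (angA m h) = - u"
    unfolding angA_def u_def[symmetric] using c2 key[of "(-u)^m"] up by (simp add: sin_arccos_abs power_abs[symmetric])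
  show "sqrt h * cos (angA m h) = (-u)^m"
    unfolding angA_def u_def[symmetric] using c2 sh by (simp add: cos_arccos_abs)
  have "0 \<le> arccos (u^m / sqrt h)" "arccos (u^m / sqrt h) \<le> pi"
       "0 \<le> arccos ((-u)^m / sqrt h)" "arccos ((-u)^m / sqrt h) \<le> pi"
    using abs_le_iff[THEN iffD1, OF c1] abs_le_iff[THEN iffD1, OF c2]
    by (auto intro!: arccos_lbound arccos_ubound)
  then show "angA m h \<le> angB m h" "angB m h \<le> angA m h + 2*pi"
    unfolding angA_def angB_def u_def[symmetric] by auto
qed

lemma finS: "finite {(i::nat,j::nat). i + j \<le> n}"
  by (rule finite_subset[of _ "{..n}\<times>{..n}"]) auto

definition Kint :: "real \<Rightarrow> real \<Rightarrow> real \<Rightarrow> nat \<Rightarrow> nat \<Rightarrow> real" where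
  "Kint r a b i j = integral {a..b} (\<lambda>t. (r * sin t)^i * (r * cos t)^j * (- r * sin t))"

lemma int_lin:
  fixes f g :: "real \<Rightarrow> real"
  assumes f: "f integrable_on S" and g: "g integrable_on S"
  shows "integral S (\<lambda>t. C * f t - D * g t) = C * integral S f - D * integral S g"
proof -
  have "integral S (\<lambda>t. C * f t - D * g t) = integral S (\<lambda>t. C * f t) - integral S (\<lambda>t. D * g t)"
    by (rule integral_diff) (rule integrable_on_mult_right[OF f], rule integrable_on_mult_right[OF g])
  also have "\<dots> = C * integral S f - D * integral S g"
    by (simp only: integral_mult[OF f, symmetric] integral_mult[OF g, symmetric])
  finally show ?thesis .
qed

lemma arc_lin:
  "arc_int (bipoly n c) (\<lambda>x y. - bipoly n d x y) r a b =
   (\<Sum>(i,j)\<in>{(i,j). i + j \<le> n}. c i j * arc_int (\<lambda>x y. x^i*y^j) (\<lambda>_ _. 0) r a b - d i j * Kint r a b i j)"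
proof -
  let ?S = "{(i::nat,j::nat). i + j \<le> n}"
  define A where "A = (\<lambda>i j t. (r * sin t)^i * (r * cos t)^j * (r * cos t))"
  define B where "B = (\<lambda>i j t. (r * sin t)^i * (r * cos t)^j * (- r * sin t))"
  have iA: "A i j integrable_on {a..b}" for i j unfolding A_def
    by (intro integrable_continuous_interval continuous_intros)
  have iB: "B i j integrable_on {a..b}" for i j unfolding B_def
    by (intro integrable_continuous_interval continuous_intros)
  have eq: "bipoly n c (r * sin t) (r * cos t) * (r * cos t) + - bipoly n d (r * sin t) (r * cos t) * (- r * sin t)
      = (\<Sum>p\<in>?S. c (fst p) (snd p) * A (fst p) (snd p) t - d (fst p) (snd p) * B (fst p) (snd p) t)" for t
    unfolding bipoly_def A_def B_def
    apply (simp only: sum_distrib_right flip: sum_negf sum.distrib)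
    apply (rule sum.cong, simp)
    apply (simp add: case_prod_unfold algebra_simps)
    done
  have "arc_int (bipoly n c) (\<lambda>x y. - bipoly n d x y) r a b
      = integral {a..b} (\<lambda>t. \<Sum>p\<in>?S. c (fst p) (snd p) * A (fst p) (snd p) t - d (fst p) (snd p) * B (fst p) (snd p) t)"
    unfolding arc_int_def eq ..
  also have "\<dots> = (\<Sum>p\<in>?S. integral {a..b} (\<lambda>t. c (fst p) (snd p) * A (fst p) (snd p) t - d (fst p) (snd p) * B (fst p) (snd p) t))"
    using iA iB by (intro Henstock_Kurzweil_Integration.integral_sum finS)
       (auto intro!: integrable_diff integrable_on_mult_right)
  also have "\<dots> = (\<Sum>p\<in>?S. c (fst p) (snd p) * integral {a..b} (A (fst p) (snd p)) - d (fst p) (snd p) * integral {a..b} (B (fst p) (snd p)))"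
    by (intro sum.cong refl int_lin iA iB)
  also have "\<dots> = (\<Sum>(i,j)\<in>?S. c i j * arc_int (\<lambda>x y. x^i*y^j) (\<lambda>_ _. 0) r a b - d i j * Kint r a b i j)"
    unfolding arc_int_def Kint_def A_def B_def case_prod_unfold by simp
  finally show ?thesis .
qed

definition inV :: "nat \<Rightarrow> nat \<Rightarrow> (real \<Rightarrow> real) \<Rightarrow> bool" where
  "inV m n f \<longleftrightarrow> (\<exists>(\<rho>p :: nat \<Rightarrow> nat \<Rightarrow> real) (\<rho>m :: nat \<Rightarrow> nat \<Rightarrow> real) (\<Phi> :: real poly).
           degree \<Phi> \<le> m * (n + 1) \<and>
           (\<forall>h > 0. f h =
               (\<Sum>(i,j)\<in>{(i,j). i + j \<le> n}. \<rho>p i j * JJ m i j h)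
             + (\<Sum>(i,j)\<in>{(i,j). i + j \<le> n}. \<rho>m i j * II m i j h)
             + poly \<Phi> (uu m h)))"

lemma inV_cong:
  assumes A: "inV m n f" and B: "\<And>h. h > 0 \<Longrightarrow> g h = f h"
  shows "inV m n g"
proof -
  from A obtain p q P where 1: "degree P \<le> m * (n + 1)" "\<forall>h > 0. f h =
               (\<Sum>(i,j)\<in>{(i,j). i + j \<le> n}. p i j * JJ m i j h)
             + (\<Sum>(i,j)\<in>{(i,j). i + j \<le> n}. q i j * II m i j h)
             + poly P (uu m h)"
    unfolding inV_def by blast
  show ?thesis unfolding inV_def
    using 1 B by (intro exI[of _ p] exI[of _ q] exI[of _ P] conjI allI impI) auto
qed

lemma inV_zero: "inV m n (\<lambda>h. 0)"
  unfolding inV_def by (rule exI[of _ "\<lambda>_ _. 0"], rule exI[of _ "\<lambda>_ _. 0"], rule exI[of _ 0]) simp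

lemma inV_add: "inV m n f \<Longrightarrow> inV m n g \<Longrightarrow> inV m n (\<lambda>h. f h + g h)"
proof -
  assume "inV m n f" "inV m n g"
  then obtain p1 q1 P1 p2 q2 P2 where
    1: "degree P1 \<le> m * (n + 1)" "\<forall>h > 0. f h =
               (\<Sum>(i,j)\<in>{(i,j). i + j \<le> n}. p1 i j * JJ m i j h)
             + (\<Sum>(i,j)\<in>{(i,j). i + j \<le> n}. q1 i j * II m i j h)
             + poly P1 (uu m h)" and
    2: "degree P2 \<le> m * (n + 1)" "\<forall>h > 0. g h =
               (\<Sum>(i,j)\<in>{(i,j). i + j \<le> n}. p2 i j * JJ m i j h)
             + (\<Sum>(i,j)\<in>{(i,j). i + j \<le> n}. q2 i j * II m i j h)
             + poly P2 (uu m h)"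
    unfolding inV_def by blast
  show ?thesis unfolding inV_def
    apply (rule exI[of _ "\<lambda>i j. p1 i j + p2 i j"], rule exI[of _ "\<lambda>i j. q1 i j + q2 i j"], rule exI[of _ "P1 + P2"])
    using 1 2 by (auto simp: degree_add_le distrib_right sum.distrib case_prod_unfold)
qed

lemma inV_scale: "inV m n f \<Longrightarrow> inV m n (\<lambda>h. c * f h)"
proof -
  assume "inV m n f"
  then obtain p1 q1 P1 where
    1: "degree P1 \<le> m * (n + 1)" "\<forall>h > 0. f h =
               (\<Sum>(i,j)\<in>{(i,j). i + j \<le> n}. p1 i j * JJ m i j h)
             + (\<Sum>(i,j)\<in>{(i,j). i + j \<le> n}. q1 i j * II m i j h)
             + poly P1 (uu m h)"
    unfolding inV_def by blast
  show ?thesis unfolding inV_def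
    apply (rule exI[of _ "\<lambda>i j. c * p1 i j"], rule exI[of _ "\<lambda>i j. c * q1 i j"], rule exI[of _ "smult c P1"])
    using 1 by (auto simp: distrib_left sum_distrib_left case_prod_unfold mult.assoc le_trans[OF degree_smult_le])
qed

lemma inV_sum: "finite A \<Longrightarrow> (\<And>x. x \<in> A \<Longrightarrow> inV m n (F x)) \<Longrightarrow> inV m n (\<lambda>h. \<Sum>x\<in>A. F x h)"
proof (induction A rule: finite_induct)
  case empty
  then show ?case using inV_zero by simp
next
  case (insert x A)
  then show ?case by (simp add: inV_add)
qed

lemma inV_poly: "degree P \<le> m * (n + 1) \<Longrightarrow> inV m n (\<lambda>h. poly P (uu m h))"
  unfolding inV_def by (rule exI[of _ "\<lambda>_ _. 0"], rule exI[of _ "\<lambda>_ _. 0"], rule exI[of _ P]) simp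

lemma delta_sum: "(i,j) \<in> {(i::nat,j::nat). i + j \<le> n} \<Longrightarrow>
  (\<Sum>(k,l)\<in>{(i,j). i + j \<le> n}. (if k = i \<and> l = j then 1 else 0) * G k l) = (G i j :: real)"
proof -
  assume a: "(i,j) \<in> {(i::nat,j::nat). i + j \<le> n}"
  have "(\<Sum>(k,l)\<in>{(i,j). i + j \<le> n}. (if k = i \<and> l = j then 1 else 0) * G k l)
     = (\<Sum>p\<in>{(i::nat,j::nat). i + j \<le> n}. if p = (i,j) then G i j else 0)"
    by (rule sum.cong) (auto split: if_splits)
  also have "\<dots> = G i j" using a finS[of n] by (simp add: sum.delta)
  finally show ?thesis .
qed

lemma inV_J: "(i,j) \<in> {(i::nat,j::nat). i + j \<le> n} \<Longrightarrow> inV m n (JJ m i j)"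
  unfolding inV_def
  by (rule exI[of _ "\<lambda>k l. if k = i \<and> l = j then 1 else 0"], rule exI[of _ "\<lambda>_ _. 0"], rule exI[of _ 0])
     (simp add: delta_sum)

lemma inV_I: "(i,j) \<in> {(i::nat,j::nat). i + j \<le> n} \<Longrightarrow> inV m n (II m i j)"
  unfolding inV_def
  by (rule exI[of _ "\<lambda>_ _. 0"], rule exI[of _ "\<lambda>k l. if k = i \<and> l = j then 1 else 0"], rule exI[of _ 0])
     (simp add: delta_sum)

lemma inV_K:
  assumes m: "m \<ge> 1" and ij: "(i,j) \<in> {(i::nat,j::nat). i + j \<le> n}"
    and G: "\<And>i j. (i,j) \<in> {(i::nat,j::nat). i + j \<le> n} \<Longrightarrow> inV m n (G i j)"
  shows "inV m n (\<lambda>h. (s * (uu m h^i*(uu m h^m)^(j+1) - (- uu m h)^i*((- uu m h)^m)^(j+1))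
            - real i * G (i-1) (j+1) h) / real (j+1))"
proof -
  define k where "k = i + m*(j+1)"
  define P where "P = smult (s / real (j+1)) (monom 1 k - monom ((-1)^k) k)"
  have dk: "k \<le> m * (n+1)"
  proof -
    have "i \<le> m * i" using m by simp
    then have "k \<le> m * (i + j + 1)" unfolding k_def by (simp add: algebra_simps)
    also have "\<dots> \<le> m * (n+1)" using ij by simp
    finally show ?thesis .
  qed
  have dP: "degree P \<le> m * (n+1)"
    unfolding P_def
    by (rule le_trans[OF degree_smult_le], rule le_trans[OF degree_diff_le])
       (use dk degree_monom_le[of 1 k] degree_monom_le[of "(-1)^k" k] in auto)
  have pP: "poly P u = s * (u^i*(u^m)^(j+1) - (- u)^i*((- u)^m)^(j+1)) / real (j+1)" for u :: real
  proof -
    have "u^i*(u^m)^(j+1) = u^k" unfolding k_def by (simp add: power_add power_mult)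
    moreover have "(- u)^i*((- u)^m)^(j+1) = (-1)^k * u^k"
      unfolding k_def by (simp add: power_add power_mult power_minus[of u] power_mult_distrib)
    ultimately show ?thesis unfolding P_def by (simp add: poly_monom)
  qed
  have A: "inV m n (\<lambda>h. poly P (uu m h))" by (rule inV_poly[OF dP])
  have B: "inV m n (\<lambda>h. (- real i / real (j+1)) * G (i-1) (j+1) h)"
  proof (cases "i = 0")
    case True
    then show ?thesis using inV_zero by simp
  next
    case False
    then have "(i-1, j+1) \<in> {(i::nat,j::nat). i + j \<le> n}" using ij by auto
    then show ?thesis by (intro inV_scale G)
  qed
  show ?thesis
    by (rule inV_cong[OF inV_add[OF A B]]) (simp add: pP diff_divide_distrib)
qed

lemma Kp_eq:
  assumes m: "m \<ge> 1" and h: "h > 0"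
  shows "Kint (sqrt h) (angA m h) (angB m h) i j =
     (1 * (uu m h^i*(uu m h^m)^(j+1) - (- uu m h)^i*((- uu m h)^m)^(j+1)) - real i * JJ m (i-1) (j+1) h) / real (j+1)"
  using endpoints[OF m h]
  unfolding Kint_def JJ_def int_plus_def arc_int_def
  by (subst ibp) auto

lemma Km_eq:
  assumes m: "m \<ge> 1" and h: "h > 0"
  shows "Kint (sqrt h) (angB m h) (angA m h + 2*pi) i j =
     ((-1) * (uu m h^i*(uu m h^m)^(j+1) - (- uu m h)^i*((- uu m h)^m)^(j+1)) - real i * II m (i-1) (j+1) h) / real (j+1)"
  using endpoints[OF m h]
  unfolding Kint_def II_def int_minus_def arc_int_def
  by (subst ibp) auto

theorem lemma3p2:
  fixes m n :: nat and ap bp am bm :: "nat \<Rightarrow> nat \<Rightarrow> real"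
  assumes "m \<ge> 1"
  shows "\<exists>(\<rho>p :: nat \<Rightarrow> nat \<Rightarrow> real) (\<rho>m :: nat \<Rightarrow> nat \<Rightarrow> real) (\<Phi> :: real poly).
           degree \<Phi> \<le> m * (n + 1) \<and>
           (\<forall>h > 0. melnikov m n ap bp am bm h =
               (\<Sum>(i,j)\<in>{(i,j). i + j \<le> n}. \<rho>p i j * JJ m i j h)
             + (\<Sum>(i,j)\<in>{(i,j). i + j \<le> n}. \<rho>m i j * II m i j h)
             + poly \<Phi> (uu m h))"
proof -
  let ?S = "{(i::nat,j::nat). i + j \<le> n}"
  define Kp where "Kp = (\<lambda>i j h. (1 * (uu m h^i*(uu m h^m)^(j+1) - (- uu m h)^i*((- uu m h)^m)^(j+1)) - real i * JJ m (i-1) (j+1) h) / real (j+1))"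
  define Km where "Km = (\<lambda>i j h. ((-1) * (uu m h^i*(uu m h^m)^(j+1) - (- uu m h)^i*((- uu m h)^m)^(j+1)) - real i * II m (i-1) (j+1) h) / real (j+1))"
  define T where "T = (\<lambda>p h. case p of (i,j) \<Rightarrow>
      (bp i j * JJ m i j h - ap i j * Kp i j h) + (bm i j * II m i j h - am i j * Km i j h))"
  have T: "inV m n (T p)" if "p \<in> ?S" for p
  proof -
    obtain i j where p: "p = (i,j)" by (cases p)
    have ij: "(i,j) \<in> ?S" using that p by simp
    have K1: "inV m n (Kp i j)" unfolding Kp_def
      by (rule inV_K[OF assms ij inV_J])
    have K2: "inV m n (Km i j)" unfolding Km_def
      by (rule inV_K[OF assms ij inV_I])
    have "inV m n (\<lambda>h. (bp i j * JJ m i j h + (- ap i j) * Kp i j h) + (bm i j * II m i j h + (- am i j) * Km i j h))"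
      by (intro inV_add inV_scale inV_J inV_I ij K1 K2)
    then show ?thesis unfolding T_def p by (rule inV_cong) simp
  qed
  have "inV m n (\<lambda>h. \<Sum>p\<in>?S. T p h)" by (rule inV_sum[OF finS T])
  then have "inV m n (melnikov m n ap bp am bm)"
  proof (rule inV_cong)
    fix h :: real assume h: "h > 0"
    show "melnikov m n ap bp am bm h = (\<Sum>p\<in>?S. T p h)"
      unfolding melnikov_def int_plus_def int_minus_def arc_lin
      unfolding T_def Kp_def Km_def Kp_eq[OF assms h, symmetric] Km_eq[OF assms h, symmetric]
      unfolding JJ_def II_def int_plus_def int_minus_def
      by (simp add: sum.distrib case_prod_unfold)
  qed
  then show ?thesis unfolding inV_def .
qed

end
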